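(* Let $Q,R\in\mathcal D$ with $Q\subset R$, and let $x,y\in Q$. Then $$|\mathcal R(\chi_{R\setminus Q}\mu)(x)|\lesssim\sum_{P\in\mathcal D:\,Q\subset P\subset R}\frac{\mu(P)}{\ell(P)^s},$$ $$|\mathcal R(\chi_{R\setminus Q}\mu)(x)-\mathcal R(\chi_{R\setminus Q}\mu)(y)|\lesssim\frac{|x-y|}{\ell(Q)}\,p(Q,R),$$ and $$\bigl|\mathcal R(\chi_{R\setminus Q}\mu)(x)-\bigl(m_Q(\mathcal R\mu)-m_R(\mathcal R\mu)\bigr)\bigr|\lesssim p(Q,R)+p(R),$$ where the implicit constants depend only on $s$, $d$ and $c_{sep}$.
   Context: $0<s<d$. $E\subset\mathbb R^d$ is a Cantor set built from a compact $Q^0$ by repeatedly choosing, inside each closed "cube" $Q$ of generation $k$, a finite nonempty family of closed children (the cubes of generation $k+1$), such that each child $Q'$ of $Q$ satisfies $\frac18\ell(Q)\le\ell(Q')\le\frac13\ell(Q)$, where $\ell(Q)=\operatorname{diam}(Q)$, and distinct children of $Q$ are at distance $\ge c_{sep}\ell(Q)$. $\mathcal D$ is the family of all such cubes. $\mu$ is a finite Borel measure supported on $E$ with $\mu(Q)>0$ for all $Q\in\mathcal D$. $\mathcal R\nu(x)=\int\frac{x-y}{|x-y|^{s+1}}\,d\nu(y)$ (the $s$-dimensional Riesz transform; $\mathcal R\mu$ is understood as a $\mu$-locally integrable function defined via truncations/principal values). $\Theta(P)=\mu(P)/\ell(P)^s$; $p(Q)=\sum_{P\in\mathcal D,\,P\supset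 Q}\frac{\ell(Q)}{\ell(P)}\Theta(P)$; for $Q\subset R$, $p(Q,R)=\sum_{P\in\mathcal D:\,Q\subset P\subset R}\frac{\ell(Q)}{\ell(P)}\Theta(P)$; $m_Qf=\frac1{\mu(Q)}\int_Qf\,d\mu$. *)

theory Defs
  imports "HOL-Analysis.Analysis" "HOL-Probability.Probability"
begin

definition children :: "(nat \<Rightarrow> 'a::euclidean_space set set) \<Rightarrow> nat \<Rightarrow> 'a set \<Rightarrow> 'a set set" where
  "children D k Q = {Q' \<in> D (Suc k). Q' \<subseteq> Q}"

definition cantor_system :: "real \<Rightarrow> (nat \<Rightarrow> 'a::euclidean_space set set) \<Rightarrow> bool" where
  "cantor_system c D \<longleftrightarrow>
     (\<exists>Q0. compact Q0 \<and> D 0 = {Q0}) \<and>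
     (\<forall>k. \<forall>Q\<in>D k. closed Q) \<and>
     (\<forall>k. \<forall>Q'\<in>D (Suc k). \<exists>Q\<in>D k. Q' \<subseteq> Q) \<and>
     (\<forall>k. \<forall>Q\<in>D k.
        finite (children D k Q) \<and> children D k Q \<noteq> {} \<and>
        (\<forall>Q'\<in>children D k Q. diameter Q / 8 \<le> diameter Q' \<and> diameter Q' \<le> diameter Q / 3) \<and>
        (\<forall>Q1\<in>children D k Q. \<forall>Q2\<in>children D k Q. Q1 \<noteq> Q2 \<longrightarrow>
            (\<forall>x\<in>Q1. \<forall>y\<in>Q2. c * diameter Q \<le> dist x y)))"

definition cubes :: "(nat \<Rightarrow> 'a set set) \<Rightarrow> 'a set set" where
  "cubes D = (\<Union>k. D k)"

definition cantor_set :: "(nat \<Rightarrow> 'a set set) \<Rightarrow> 'a set" where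
  "cantor_set D = (\<Inter>k. \<Union>(D k))"

definition Theta :: "'a::euclidean_space measure \<Rightarrow> real \<Rightarrow> 'a set \<Rightarrow> real" where
  "Theta M s P = measure M P / diameter P powr s"

definition pcoef :: "(nat \<Rightarrow> 'a::euclidean_space set set) \<Rightarrow> 'a measure \<Rightarrow> real \<Rightarrow> 'a set \<Rightarrow> real" where
  "pcoef D M s Q = (\<Sum>P\<in>{P\<in>cubes D. Q \<subseteq> P}. diameter Q / diameter P * Theta M s P)"

definition pcoef2 :: "(nat \<Rightarrow> 'a::euclidean_space set set) \<Rightarrow> 'a measure \<Rightarrow> real \<Rightarrow> 'a set \<Rightarrow> 'a set \<Rightarrow> real" where
  "pcoef2 D M s Q R = (\<Sum>P\<in>{P\<in>cubes D. Q \<subseteq> P \<and> P \<subseteq> R}. diameter Q / diameter P * Theta M s P)"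

definition riesz_kernel :: "real \<Rightarrow> 'a::euclidean_space \<Rightarrow> 'a \<Rightarrow> 'a" where
  "riesz_kernel s x y = (1 / norm (x - y) powr (s + 1)) *\<^sub>R (x - y)"

text \<open>Riesz transform of chi_A mu at x (absolutely convergent integral).\<close>
definition riesz :: "'a::euclidean_space measure \<Rightarrow> real \<Rightarrow> 'a set \<Rightarrow> 'a \<Rightarrow> 'a" where
  "riesz M s A x = (\<integral>y. indicator A y *\<^sub>R riesz_kernel s x y \<partial>M)"

definition riesz_trunc :: "'a::euclidean_space measure \<Rightarrow> real \<Rightarrow> real \<Rightarrow> 'a \<Rightarrow> 'a" where
  "riesz_trunc M s \<epsilon> x = (\<integral>y. indicator {y. \<epsilon> < dist x y} y *\<^sub>R riesz_kernel s x y \<partial>M)"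

definition mean :: "'a::euclidean_space measure \<Rightarrow> 'a set \<Rightarrow> ('a \<Rightarrow> 'a) \<Rightarrow> 'a" where
  "mean M Q f = (1 / measure M Q) *\<^sub>R set_lebesgue_integral M Q f"

end

theory Submission
  imports Defs
begin


lemma knorm: assumes "0 < s" shows "norm (riesz_kernel s x y) = dist x y powr (-s)"
proof (cases "x = y")
  case True then show ?thesis by (simp add: riesz_kernel_def)
next
  case False
  then have d: "0 < norm (x - y)" by simp
  have "norm (riesz_kernel s x y) = norm (x-y) / norm (x - y) powr (s+1)"
    unfolding riesz_kernel_def by simp
  also have "\<dots> = norm (x-y) powr 1 / norm (x - y) powr (s+1)" using d by simp
  also have "\<dots> = norm (x-y) powr (1 - (s+1))" by (simp only: powr_diff)
  finally show ?thesis by (simp add: dist_norm)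
qed

lemma kbound: assumes "0 < s" "0 < r" "r \<le> dist x y"
  shows "norm (riesz_kernel s x y) \<le> r powr (-s)"
  using knorm[OF assms(1), of x y] powr_mono2'[of "-s" r "dist x y"] assms by linarith

lemma kdiff0:
  fixes a b :: "'a::real_normed_vector"
  assumes s: "0 < s" and r: "0 < r" "r \<le> norm a" "norm a \<le> norm b"
  shows "norm ((1 / norm a powr (s+1)) *\<^sub>R a - (1 / norm b powr (s+1)) *\<^sub>R b)
        \<le> (2 * s + 3) * norm (a - b) * r powr (-(s+1))"
proof -
  define f where "f t = t powr (-(s+1))" for t :: real
  define u where "u = norm a"
  define v where "v = norm b"
  have u: "0 < u" "r \<le> u" "u \<le> v" using r unfolding u_def v_def by auto
  have fa: "1 / norm a powr (s+1) = f u" "1 / norm b powr (s+1) = f v"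
    unfolding f_def u_def v_def powr_minus_divide by simp_all
  have fpos: "0 \<le> f t" for t unfolding f_def by simp
  have fur: "f u \<le> f r" unfolding f_def using u r s by (intro powr_mono2') auto
  have fmono: "f v \<le> f u" unfolding f_def using u s by (intro powr_mono2') auto
  have uv: "v - u \<le> norm (a - b)" unfolding u_def v_def by (metis norm_minus_commute norm_triangle_ineq2)
  have eq: "f u *\<^sub>R a - f v *\<^sub>R b = f u *\<^sub>R (a - b) + (f u - f v) *\<^sub>R b"
    by (simp add: algebra_simps)
  have "norm (f u *\<^sub>R a - f v *\<^sub>R b) \<le> f u * norm (a - b) + (f u - f v) * v"
  proof -
    have "norm (f u *\<^sub>R a - f v *\<^sub>R b) \<le> norm (f u *\<^sub>R (a - b)) + norm ((f u - f v) *\<^sub>R b)"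
      unfolding eq by (rule norm_triangle_ineq)
    also have "norm (f u *\<^sub>R (a - b)) = f u * norm (a - b)" using fpos[of u] by simp
    also have "norm ((f u - f v) *\<^sub>R b) = (f u - f v) * v" using fmono unfolding v_def by simp
    finally show ?thesis .
  qed
  also have "\<dots> \<le> f r * norm (a - b) + 2 * (s + 1) * norm (a - b) * f r"
  proof -
    have A: "f u * norm (a - b) \<le> f r * norm (a - b)" using fur by (simp add: mult_right_mono)
    have B: "(f u - f v) * v \<le> 2 * (s + 1) * norm (a - b) * f r"
    proof (cases "v \<le> 2 * u")
      case True
      show ?thesis
      proof (cases "u = v")
        case True then show ?thesis using fpos s by simp
      next
        case False
        then have uv': "u < v" using u by simp
        have der: "\<And>t. u \<le> t \<Longrightarrow> t \<le> v \<Longrightarrow> (f has_real_derivative (-(s+1)) * t powr (-(s+1) - 1)) (at t)"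
          unfolding f_def using u by (intro has_real_derivative_powr) auto
        obtain z where z: "u < z" "z < v" "f v - f u = (v - u) * ((-(s+1)) * z powr (-(s+1) - 1))"
          using MVT2[OF uv' der] by blast
        have zz: "z powr (-(s+1) - 1) \<le> u powr (-(s+1) - 1)" using z u s by (intro powr_mono2') auto
        have "f u - f v = (v - u) * (s+1) * z powr (-(s+1) - 1)" using z by (simp add: algebra_simps)
        also have "\<dots> \<le> (v - u) * (s+1) * u powr (-(s+1) - 1)"
          using zz u s by (intro mult_left_mono) auto
        finally have 1: "f u - f v \<le> (v - u) * (s+1) * u powr (-(s+1) - 1)" .
        have "(f u - f v) * v \<le> ((v - u) * (s+1) * u powr (-(s+1) - 1)) * (2 * u)"
          using 1 True fmono u by (intro mult_mono) auto
        also have "\<dots> = 2 * (s+1) * (v - u) * (u powr (-(s+1) - 1) * u)" by (simp add: algebra_simps)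
        also have "u powr (-(s+1) - 1) * u = f u"
        proof -
          have e: "u powr 1 = u" using u by simp
          have "u powr (-(s+1) - 1) * u = u powr (-(s+1) - 1) * u powr 1" by (simp only: e)
          also have "\<dots> = u powr (-(s+1) - 1 + 1)" by (simp only: powr_add)
          also have "\<dots> = f u" unfolding f_def by (simp add: algebra_simps)
          finally show ?thesis .
        qed
        also have "2 * (s+1) * (v - u) * f u \<le> 2 * (s + 1) * norm (a - b) * f r"
          using uv fur u s fpos by (intro mult_mono) auto
        finally show ?thesis .
      qed
    next
      case False
      have "(f u - f v) * v \<le> f u * v" using fpos u by (simp add: mult_right_mono)
      also have "\<dots> \<le> f r * (2 * (v - u))" using fur False fpos u by (intro mult_mono) auto
      also have "\<dots> \<le> f r * (2 * norm (a - b))" using uv fpos by (intro mult_left_mono) auto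
      also have "\<dots> \<le> 2 * (s + 1) * norm (a - b) * f r" using s fpos
        by (simp add: algebra_simps mult_left_mono)
      finally show ?thesis .
    qed
    from A B show ?thesis by simp
  qed
  also have "\<dots> = (2 * s + 3) * norm (a - b) * f r" by (simp add: algebra_simps)
  finally show ?thesis unfolding fa f_def .
qed

lemma kdiff:
  fixes a b :: "'a::real_normed_vector"
  assumes s: "0 < s" and r: "0 < r" "r \<le> norm a" "r \<le> norm b"
  shows "norm ((1 / norm a powr (s+1)) *\<^sub>R a - (1 / norm b powr (s+1)) *\<^sub>R b)
        \<le> (2 * s + 3) * norm (a - b) * r powr (-(s+1))"
proof (cases "norm a \<le> norm b")
  case True then show ?thesis using kdiff0[OF s r(1,2) True] by simp
next
  case False
  have "norm ((1 / norm b powr (s+1)) *\<^sub>R b - (1 / norm a powr (s+1)) *\<^sub>R a)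
        \<le> (2 * s + 3) * norm (b - a) * r powr (-(s+1))" using kdiff0[OF s r(1,3)] False by simp
  then show ?thesis by (simp add: norm_minus_commute)
qed

lemma kdiff_pts: assumes "0 < s" "0 < r" "r \<le> dist x w" "r \<le> dist y w"
  shows "norm (riesz_kernel s x w - riesz_kernel s y w) \<le> (2 * s + 3) * dist x y * r powr (-(s+1))"
  using kdiff[OF assms(1,2), of "x - w" "y - w"] assms(3,4) unfolding riesz_kernel_def
  by (simp add: dist_norm)




locale cs =
  fixes c :: real and D :: "nat \<Rightarrow> 'a::euclidean_space set set" and M :: "'a measure"
  assumes cpos: "0 < c"
  and sys: "cantor_system c D"
  and sM: "sets M = sets borel"
  and fin: "finite_measure M"
  and Enull: "emeasure M (- cantor_set D) = 0"
  and pos: "\<forall>P\<in>cubes D. 0 < measure M P"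
begin

lemmas sysc = sys[unfolded cantor_system_def]
lemma top: obtains Q0 where "compact Q0" "D 0 = {Q0}"
  using sysc[THEN conjunct1] by blast

definition "Q0 = (THE Q. D 0 = {Q})"

lemma Q0: "D 0 = {Q0}" "compact Q0"
proof -
  obtain A where "compact A" "D 0 = {A}" by (rule top)
  then have "Q0 = A" unfolding Q0_def by auto
  then show "D 0 = {Q0}" "compact Q0" using \<open>compact A\<close> \<open>D 0 = {A}\<close> by auto
qed

lemma parent: "Q' \<in> D (Suc k) \<Longrightarrow> \<exists>Q\<in>D k. Q' \<subseteq> Q"
  using sysc[THEN conjunct2, THEN conjunct2, THEN conjunct1] by blast

lemma childinfo: assumes "Q \<in> D k"
  shows "finite (children D k Q)"
   "\<And>Q'. Q'\<in>children D k Q \<Longrightarrow> diameter Q / 8 \<le> diameter Q' \<and> diameter Q' \<le> diameter Q / 3"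
   "\<And>Q1 Q2 x y. Q1\<in>children D k Q \<Longrightarrow> Q2\<in>children D k Q \<Longrightarrow> Q1 \<noteq> Q2 \<Longrightarrow> x \<in> Q1 \<Longrightarrow> y \<in> Q2 \<Longrightarrow> c * diameter Q \<le> dist x y"
  using sysc[THEN conjunct2, THEN conjunct2, THEN conjunct2, rule_format, OF assms] by blast+

lemma cube_closed: "Q \<in> D k \<Longrightarrow> closed Q"
  using sysc[THEN conjunct2, THEN conjunct1] by blast

lemma sub_Q0: "P \<in> D k \<Longrightarrow> P \<subseteq> Q0"
proof (induction k arbitrary: P)
  case 0 then show ?case using Q0 by auto
next
  case (Suc k) then show ?case using parent by blast
qed

lemma cubesI: "P \<in> D k \<Longrightarrow> P \<in> cubes D" unfolding cubes_def by blast
lemma cubesE: "P \<in> cubes D \<Longrightarrow> (\<And>k. P \<in> D k \<Longrightarrow> thesis) \<Longrightarrow> thesis" unfolding cubes_def by blast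

lemma cube_bounded: "P \<in> cubes D \<Longrightarrow> bounded P"
  by (metis Q0(2) bounded_subset compact_imp_bounded cubesE sub_Q0)

lemma cube_ne: "P \<in> cubes D \<Longrightarrow> P \<noteq> {}"
  using pos by fastforce

lemma finite_D: "finite (D k)"
proof (induction k)
  case 0 then show ?case using Q0 by simp
next
  case (Suc k)
  have "D (Suc k) \<subseteq> (\<Union>Q\<in>D k. children D k Q)"
    using parent unfolding children_def by blast
  moreover have "finite (\<Union>Q\<in>D k. children D k Q)" using Suc childinfo(1) by blast
  ultimately show ?case using finite_subset by blast
qed

lemma diam_le: "bounded P \<Longrightarrow> x \<in> P \<Longrightarrow> y \<in> P \<Longrightarrow> dist x y \<le> diameter P"
  by (rule diameter_bounded_bound)

lemma disjoint: "Q1 \<in> D k \<Longrightarrow> Q2 \<in> D k \<Longrightarrow> Q1 \<noteq> Q2 \<Longrightarrow> Q1 \<inter> Q2 = {}"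
proof (induction k arbitrary: Q1 Q2)
  case 0 then show ?case using Q0 by auto
next
  case (Suc k)
  obtain A1 where A1: "A1 \<in> D k" "Q1 \<subseteq> A1" using parent Suc by blast
  obtain A2 where A2: "A2 \<in> D k" "Q2 \<subseteq> A2" using parent Suc by blast
  show ?case
  proof (cases "A1 = A2")
    case False then show ?thesis using Suc.IH[OF A1(1) A2(1)] A1 A2 by blast
  next
    case True
    show ?thesis
    proof (rule ccontr)
      assume "Q1 \<inter> Q2 \<noteq> {}"
      then obtain x where x: "x \<in> Q1" "x \<in> Q2" by blast
      have ch: "Q1 \<in> children D k A1" "Q2 \<in> children D k A1"
        using Suc.prems A1 A2 True unfolding children_def by auto
      have "c * diameter A1 \<le> dist x x" by (rule childinfo(3)[OF A1(1) ch Suc.prems(3) x])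
      then have d0: "diameter A1 \<le> 0" using cpos by (simp add: mult_le_0_iff)
      have bA: "bounded A1" using cube_bounded cubesI A1 by blast
      have "\<forall>y\<in>A1. y = x"
      proof
        fix y assume "y \<in> A1"
        then have "dist x y \<le> diameter A1" using diam_le[OF bA] x A1 by blast
        then show "y = x" using d0 by (metis dist_le_zero_iff order_trans dist_commute)
      qed
      then have "Q1 = {x}" "Q2 = {x}" using A1 A2 x True by auto
      then show False using Suc.prems by simp
    qed
  qed
qed

lemma ancestor: "Q \<in> D k \<Longrightarrow> j \<le> k \<Longrightarrow> \<exists>B\<in>D j. Q \<subseteq> B"
proof (induction k arbitrary: Q)
  case 0 then show ?case by auto
next
  case (Suc k)
  show ?case
  proof (cases "j = Suc k")
    case True then show ?thesis using Suc by blast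
  next
    case False
    obtain A where "A \<in> D k" "Q \<subseteq> A" using parent Suc by blast
    moreover have "j \<le> k" using False Suc.prems by simp
    ultimately show ?thesis using Suc.IH[of A] by blast
  qed
qed

lemma E_in: "w \<in> cantor_set D \<Longrightarrow> \<exists>W\<in>D k. w \<in> W"
  unfolding cantor_set_def by blast

lemma same_gen_sub: "Q \<in> D k \<Longrightarrow> A \<in> D k \<Longrightarrow> Q \<subseteq> A \<Longrightarrow> Q = A"
proof (rule ccontr)
  assume "Q \<in> D k" "A \<in> D k" "Q \<subseteq> A" "Q \<noteq> A"
  then have "Q \<inter> A = {}" using disjoint by blast
  then have "Q = {}" using \<open>Q \<subseteq> A\<close> by blast
  then show False using cube_ne cubesI \<open>Q \<in> D k\<close> by blast
qed

lemma finite_above: assumes "Q \<in> cubes D" shows "finite {P\<in>cubes D. Q \<subseteq> P}"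
proof -
  obtain k where k: "Q \<in> D k" using assms cubesE by blast
  have "{P\<in>cubes D. Q \<subseteq> P} \<subseteq> insert Q (\<Union>j\<le>k. D j)"
  proof
    fix P assume P: "P \<in> {P\<in>cubes D. Q \<subseteq> P}"
    then obtain j where j: "P \<in> D j" "Q \<subseteq> P" using cubesE by blast
    show "P \<in> insert Q (\<Union>j\<le>k. D j)"
    proof (cases "j \<le> k")
      case True then show ?thesis using j by blast
    next
      case False
      then obtain B where B: "B \<in> D k" "P \<subseteq> B" using ancestor[OF j(1), of k] by auto
      then have "Q = B" using same_gen_sub[OF k B(1)] j by blast
      then show ?thesis using B j by blast
    qed
  qed
  moreover have "finite (insert Q (\<Union>j\<le>k. D j))" using finite_D by blast
  ultimately show ?thesis by (rule finite_subset)
qed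

end


context cs begin

lemma unique_anc: "A \<in> D j \<Longrightarrow> A' \<in> D j \<Longrightarrow> X \<subseteq> A \<Longrightarrow> X \<subseteq> A' \<Longrightarrow> X \<noteq> {} \<Longrightarrow> A = A'"
  using disjoint by blast

lemma key: assumes "Q \<in> D k" "A \<in> D j" "j \<le> k" "Q \<subseteq> A" "w \<in> cantor_set D" "w \<in> A" "w \<notin> Q"
  shows "\<exists>P\<in>cubes D. Q \<subseteq> P \<and> P \<subseteq> A \<and> w \<in> P \<and> 0 < diameter P \<and> (\<forall>x\<in>Q. c * diameter P \<le> dist x w)"
  using assms
proof (induction "k - j" arbitrary: A j)
  case 0
  then have "j = k" by simp
  then have "Q = A" using same_gen_sub 0 by blast
  then show ?case using 0 by blast
next
  case (Suc n)
  have Qne: "Q \<noteq> {}" using cube_ne cubesI Suc.prems(1) by blast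
  have jk: "Suc j \<le> k" using Suc.hyps by simp
  obtain B where B: "B \<in> D (Suc j)" "Q \<subseteq> B" using ancestor[OF Suc.prems(1) jk] by blast
  obtain A' where A': "A' \<in> D j" "B \<subseteq> A'" using parent B by blast
  have "A' = A" using unique_anc[OF A'(1) Suc.prems(2), of Q] A' B Suc.prems Qne by blast
  with A' have BA: "B \<subseteq> A" by simp
  obtain W where W: "W \<in> D (Suc j)" "w \<in> W" using E_in Suc.prems(5) by blast
  obtain A'' where A'': "A'' \<in> D j" "W \<subseteq> A''" using parent W by blast
  have "A'' = A" using unique_anc[OF A''(1) Suc.prems(2), of "{w}"] A'' W Suc.prems by blast
  with A'' have WA: "W \<subseteq> A" by simp
  show ?case
  proof (cases "W = B")
    case True
    have "n = k - Suc j" using Suc.hyps by simp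
    from Suc.hyps(1)[OF this Suc.prems(1) B(1) jk B(2) Suc.prems(5)] W True Suc.prems(7)
    obtain P where "P\<in>cubes D" "Q \<subseteq> P \<and> P \<subseteq> B \<and> w \<in> P \<and> 0 < diameter P \<and> (\<forall>x\<in>Q. c * diameter P \<le> dist x w)"
      by blast
    then show ?thesis using BA by blast
  next
    case False
    have ch: "B \<in> children D j A" "W \<in> children D j A" using B W BA WA unfolding children_def by auto
    have sep: "\<forall>x\<in>Q. c * diameter A \<le> dist x w"
      using childinfo(3)[OF Suc.prems(2) ch(1) ch(2) False[symmetric]] B W by blast
    obtain x where x: "x \<in> Q" using Qne by blast
    have "dist x w \<le> diameter A" using diam_le[OF cube_bounded[OF cubesI[OF Suc.prems(2)]]] x Suc.prems by blast
    moreover have "0 < dist x w" using x Suc.prems(7) by auto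
    ultimately have "0 < diameter A" by linarith
    then show ?thesis using sep Suc.prems cubesI by blast
  qed
qed

lemma E_Q0: "w \<in> cantor_set D \<Longrightarrow> w \<in> Q0"
  using E_in[of w 0] Q0 by auto

lemma AE_E: "AE w in M. w \<in> cantor_set D"
proof -
  have "- cantor_set D \<in> sets M"
  proof -
    have "\<And>k. closed (\<Union>(D k))" using finite_D cube_closed by (intro closed_Union) auto
    then have "closed (cantor_set D)" unfolding cantor_set_def by (intro closed_INT) auto
    then show ?thesis using sM by (simp add: borel_closed)
  qed
  then show ?thesis using Enull by (intro AE_I[of _ _ "- cantor_set D"]) auto
qed

end



locale cs2 = cs c D M for c and D :: "nat \<Rightarrow> 'a::euclidean_space set set" and M +
  fixes s :: real assumes spos: "0 < s"
begin

lemma sMM: "sets (M \<Otimes>\<^sub>M M) = sets (borel \<Otimes>\<^sub>M (borel :: 'a measure))"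
  using sM by (intro sets_pair_measure_cong) auto

lemma measM: "f \<in> borel_measurable borel \<Longrightarrow> f \<in> borel_measurable M"
  using measurable_cong_sets[OF sM refl] by blast

lemma measMM: "f \<in> borel_measurable (borel \<Otimes>\<^sub>M borel) \<Longrightarrow> f \<in> borel_measurable (M \<Otimes>\<^sub>M M)"
  using measurable_cong_sets[OF sMM refl] by blast

lemma setsM: "S \<in> sets borel \<Longrightarrow> S \<in> sets M" using sM by simp

lemma mKx: "(\<lambda>w. riesz_kernel s x w) \<in> borel_measurable M"
  by (rule measM) (unfold riesz_kernel_def, measurable)

lemma mK: "(\<lambda>p. riesz_kernel s (fst p) (snd p)) \<in> borel_measurable (borel \<Otimes>\<^sub>M (borel :: 'a measure))"
  unfolding riesz_kernel_def by measurable

lemma cube_sets: "P \<in> cubes D \<Longrightarrow> P \<in> sets M"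
  using cube_closed setsM cubesE by (metis borel_closed)

definition "ch Q A = {P\<in>cubes D. Q \<subseteq> P \<and> P \<subseteq> A}"

lemma finite_ch: "Q \<in> cubes D \<Longrightarrow> finite (ch Q A)"
  unfolding ch_def using finite_above by (rule finite_subset[rotated]) auto

lemma PW: assumes "Q \<in> cubes D" "A \<in> cubes D" "Q \<subseteq> A" "w \<in> cantor_set D" "w \<in> A" "w \<notin> Q"
  shows "\<exists>P\<in>ch Q A. w \<in> P \<and> 0 < diameter P \<and> (\<forall>x\<in>Q. c * diameter P \<le> dist x w)"
proof -
  obtain k where k: "Q \<in> D k" using assms cubesE by blast
  obtain j where j: "A \<in> D j" using assms cubesE by blast
  have "j \<le> k"
  proof (rule ccontr)
    assume "\<not> j \<le> k"
    then obtain B where "B \<in> D k" "A \<subseteq> B" using ancestor[OF j, of k] by auto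
    then have "Q = B" using same_gen_sub[OF k] assms(3) by blast
    then show False using \<open>A \<subseteq> B\<close> assms by blast
  qed
  from key[OF k j this assms(3-6)] show ?thesis unfolding ch_def by blast
qed

lemma G_int: fixes h :: "'a set \<Rightarrow> real" assumes "Q \<in> cubes D"
  shows "integrable M (\<lambda>w. \<Sum>P\<in>ch Q A. indicator P w * h P)"
    "(\<integral>w. (\<Sum>P\<in>ch Q A. indicator P w * h P) \<partial>M) = (\<Sum>P\<in>ch Q A. measure M P * h P)"
proof -
  have i: "integrable M (\<lambda>w. indicator P w * h P)" if "P \<in> ch Q A" for P
  proof -
    have "P \<in> sets M" using that cube_sets unfolding ch_def by blast
    then have "integrable M (indicator P :: 'a \<Rightarrow> real)"
      using finite_measure.emeasure_finite[OF fin] by (intro integrable_real_indicator) (auto simp: less_top)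
    then show ?thesis by simp
  qed
  show "integrable M (\<lambda>w. \<Sum>P\<in>ch Q A. indicator P w * h P)"
    apply (rule Bochner_Integration.integrable_sum[where f="\<lambda>P w. indicator P w * h P"])
    apply (rule i)
    apply assumption
    done
  have "(\<integral>w. (\<Sum>P\<in>ch Q A. indicator P w * h P) \<partial>M) = (\<Sum>P\<in>ch Q A. \<integral>w. indicator P w * h P \<partial>M)"
    using i by (intro Bochner_Integration.integral_sum) auto
  also have "\<dots> = (\<Sum>P\<in>ch Q A. measure M P * h P)"
  proof (intro sum.cong refl)
    fix P assume "P \<in> ch Q A"
    then have "P \<in> sets M" using cube_sets unfolding ch_def by blast
    then show "(\<integral>w. indicator P w * h P \<partial>M) = measure M P * h P" by simp
  qed
  finally show "(\<integral>w. (\<Sum>P\<in>ch Q A. indicator P w * h P) \<partial>M) = (\<Sum>P\<in>ch Q A. measure M P * h P)" .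
qed

lemma bound_by: fixes f :: "'a \<Rightarrow> 'a"
  assumes "integrable M f" "integrable M g" "AE w in M. norm (f w) \<le> g w"
  shows "norm (integral\<^sup>L M f) \<le> integral\<^sup>L M g"
proof -
  have "norm (integral\<^sup>L M f) \<le> (\<integral>w. norm (f w) \<partial>M)" by (rule integral_norm_bound)
  also have "\<dots> \<le> integral\<^sup>L M g" using assms by (intro integral_mono_AE) auto
  finally show ?thesis .
qed

lemma G_member: fixes h :: "'a set \<Rightarrow> real" and w :: 'a assumes "Q \<in> cubes D" "P \<in> ch Q A" "w \<in> P" "\<And>P. 0 \<le> h P"
  shows "h P \<le> (\<Sum>P\<in>ch Q A. indicator P w * h P)"
proof -
  have "h P = indicator P w * h P" using assms by simp
  also have "\<dots> \<le> (\<Sum>P\<in>ch Q A. indicator P w * h P)"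
    using assms finite_ch by (intro member_le_sum) auto
  finally show ?thesis .
qed

lemma G_nonneg: fixes h :: "'a set \<Rightarrow> real" and w :: 'a
  shows "(\<And>P. 0 \<le> h P) \<Longrightarrow> 0 \<le> (\<Sum>P\<in>ch Q A. indicator P w * h P)"
  by (intro sum_nonneg mult_nonneg_nonneg) auto

lemma IB1: assumes Q: "Q \<in> cubes D" "A \<in> cubes D" "Q \<subseteq> A" and S: "S \<in> sets borel"
  and SE: "\<And>w. w \<in> S \<Longrightarrow> w \<in> cantor_set D \<Longrightarrow> w \<in> A \<and> w \<notin> Q" and x: "x \<in> Q"
  shows "integrable M (\<lambda>w. indicator S w *\<^sub>R riesz_kernel s x w)"
    "norm (riesz M s S x) \<le> (\<Sum>P\<in>ch Q A. measure M P * (c * diameter P) powr (-s))"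
proof -
  define h where "h (P::'a set) = (c * diameter P) powr (-s)" for P
  have h0: "0 \<le> h P" for P unfolding h_def by simp
  define G where "G (w::'a) = (\<Sum>P\<in>ch Q A. indicator P w * h P)" for w
  have AEb: "AE w in M. norm (indicator S w *\<^sub>R riesz_kernel s x w) \<le> G w"
    using AE_E
  proof eventually_elim
    case (elim w)
    show ?case
    proof (cases "w \<in> S")
      case False then show ?thesis using G_nonneg[OF h0] unfolding G_def by simp
    next
      case True
      with SE elim have wA: "w \<in> A" "w \<notin> Q" by auto
      obtain P where P: "P \<in> ch Q A" "w \<in> P" "0 < diameter P" "\<forall>x\<in>Q. c * diameter P \<le> dist x w"
        using PW[OF Q elim wA] by blast
      have "norm (riesz_kernel s x w) \<le> h P" unfolding h_def
        using P x cpos by (intro kbound spos) auto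
      also have "\<dots> \<le> G w" unfolding G_def by (rule G_member[OF Q(1) P(1,2) h0])
      finally show ?thesis using True by simp
    qed
  qed
  have Gi: "integrable M G" unfolding G_def by (rule G_int[OF Q(1)])
  have mf: "(\<lambda>w. indicator S w *\<^sub>R riesz_kernel s x w) \<in> borel_measurable M"
    using S mKx by (auto intro!: borel_measurable_scaleR borel_measurable_indicator setsM)
  show fi: "integrable M (\<lambda>w. indicator S w *\<^sub>R riesz_kernel s x w)"
    using AEb G_nonneg[OF h0] by (intro Bochner_Integration.integrable_bound[OF Gi mf]) (auto simp: G_def)
  have "norm (riesz M s S x) \<le> integral\<^sup>L M G"
    unfolding riesz_def by (rule bound_by[OF fi Gi AEb])
  also have "\<dots> = (\<Sum>P\<in>ch Q A. measure M P * h P)" unfolding G_def by (rule G_int[OF Q(1)])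
  finally show "norm (riesz M s S x) \<le> (\<Sum>P\<in>ch Q A. measure M P * (c * diameter P) powr (-s))"
    unfolding h_def .
qed

lemma IB2: assumes Q: "Q \<in> cubes D" "A \<in> cubes D" "Q \<subseteq> A" and S: "S \<in> sets borel"
  and SE: "\<And>w. w \<in> S \<Longrightarrow> w \<in> cantor_set D \<Longrightarrow> w \<in> A \<and> w \<notin> Q" and x: "x \<in> Q" "y \<in> Q"
  shows "norm (riesz M s S x - riesz M s S y)
     \<le> (\<Sum>P\<in>ch Q A. measure M P * ((2 * s + 3) * dist x y * (c * diameter P) powr (-(s+1))))"
proof -
  define h where "h (P::'a set) = (2 * s + 3) * dist x y * (c * diameter P) powr (-(s+1))" for P
  have h0: "0 \<le> h P" for P unfolding h_def using spos by simp
  define G where "G (w::'a) = (\<Sum>P\<in>ch Q A. indicator P w * h P)" for w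
  have AEb: "AE w in M. norm (indicator S w *\<^sub>R riesz_kernel s x w - indicator S w *\<^sub>R riesz_kernel s y w) \<le> G w"
    using AE_E
  proof eventually_elim
    case (elim w)
    show ?case
    proof (cases "w \<in> S")
      case False then show ?thesis using G_nonneg[OF h0] unfolding G_def by simp
    next
      case True
      with SE elim have wA: "w \<in> A" "w \<notin> Q" by auto
      obtain P where P: "P \<in> ch Q A" "w \<in> P" "0 < diameter P" "\<forall>x\<in>Q. c * diameter P \<le> dist x w"
        using PW[OF Q elim wA] by blast
      have "norm (riesz_kernel s x w - riesz_kernel s y w) \<le> h P" unfolding h_def
        using P x cpos by (intro kdiff_pts spos) auto
      also have "\<dots> \<le> G w" unfolding G_def by (rule G_member[OF Q(1) P(1,2) h0])
      finally show ?thesis using True by simp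
    qed
  qed
  have Gi: "integrable M G" unfolding G_def by (rule G_int[OF Q(1)])
  have fx: "integrable M (\<lambda>w. indicator S w *\<^sub>R riesz_kernel s x w)" by (rule IB1(1)[OF Q S SE x(1)])
  have fy: "integrable M (\<lambda>w. indicator S w *\<^sub>R riesz_kernel s y w)" by (rule IB1(1)[OF Q S SE x(2)])
  have "riesz M s S x - riesz M s S y = (\<integral>w. indicator S w *\<^sub>R riesz_kernel s x w - indicator S w *\<^sub>R riesz_kernel s y w \<partial>M)"
    unfolding riesz_def using fx fy by (simp add: Bochner_Integration.integral_diff)
  also have "norm \<dots> \<le> integral\<^sup>L M G"
    by (rule bound_by[OF _ Gi AEb]) (use fx fy in auto)
  also have "\<dots> = (\<Sum>P\<in>ch Q A. measure M P * h P)" unfolding G_def by (rule G_int[OF Q(1)])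
  finally show ?thesis unfolding h_def .
qed

end


context cs2 begin

lemma sf: "sigma_finite_measure M" using fin unfolding finite_measure_def by blast

lemma mI: "(\<lambda>p::'a\<times>'a. indicator {y. e < dist (fst p) y} (snd p) :: real) \<in> borel_measurable (borel \<Otimes>\<^sub>M borel)"
proof -
  have "(\<lambda>p::'a\<times>'a. indicator {y. e < dist (fst p) y} (snd p) :: real) = indicator {p. e < dist (fst p) (snd p)}"
    by (auto simp: indicator_def fun_eq_iff)
  moreover have "{p::'a\<times>'a. e < dist (fst p) (snd p)} \<in> sets (borel \<Otimes>\<^sub>M borel)"
  proof -
    have "(\<lambda>p::'a\<times>'a. dist (fst p) (snd p)) \<in> borel_measurable (borel \<Otimes>\<^sub>M borel)" by measurable
    from borel_measurable_less[OF borel_measurable_const[of e] this]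
    show ?thesis by (simp add: space_pair_measure)
  qed
  ultimately show ?thesis by simp
qed

lemma mS1: "S \<in> sets borel \<Longrightarrow> (\<lambda>p::'a\<times>'a. indicator S (fst p) :: real) \<in> borel_measurable (borel \<Otimes>\<^sub>M borel)"
  by (rule measurable_compose[OF measurable_fst borel_measurable_indicator])
lemma mS2: "S \<in> sets borel \<Longrightarrow> (\<lambda>p::'a\<times>'a. indicator S (snd p) :: real) \<in> borel_measurable (borel \<Otimes>\<^sub>M borel)"
  by (rule measurable_compose[OF measurable_snd borel_measurable_indicator])

lemma kb_e: "0 < e \<Longrightarrow> e < dist z w \<Longrightarrow> norm (riesz_kernel s z w) \<le> e powr (-s)"
  by (intro kbound spos) auto

lemma riesz_meas: assumes "S \<in> sets borel" shows "riesz M s S \<in> borel_measurable M"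
proof -
  have "(\<lambda>p. indicator S (snd p) *\<^sub>R riesz_kernel s (fst p) (snd p)) \<in> borel_measurable (M \<Otimes>\<^sub>M M)"
    by (intro measMM borel_measurable_scaleR mK mS2 assms)
  then have "(\<lambda>(x, y). indicator S y *\<^sub>R riesz_kernel s x y) \<in> borel_measurable (M \<Otimes>\<^sub>M M)"
    by (simp add: case_prod_beta)
  then show ?thesis unfolding riesz_def
    by (rule sigma_finite_measure.borel_measurable_lebesgue_integral[OF sf])
qed

lemma trunc_meas: "riesz_trunc M s e \<in> borel_measurable M"
proof -
  have "(\<lambda>p. indicator {y. e < dist (fst p) y} (snd p) *\<^sub>R riesz_kernel s (fst p) (snd p)) \<in> borel_measurable (M \<Otimes>\<^sub>M M)"
    by (intro measMM borel_measurable_scaleR mK mI)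
  then have "(\<lambda>(x, y). indicator {y. e < dist x y} y *\<^sub>R riesz_kernel s x y) \<in> borel_measurable (M \<Otimes>\<^sub>M M)"
    by (simp add: case_prod_beta)
  then show ?thesis unfolding riesz_trunc_def
    by (rule sigma_finite_measure.borel_measurable_lebesgue_integral[OF sf])
qed

lemma tbound: assumes "0 < e"
  shows "norm ((g * indicator {y. e < dist z y} w) *\<^sub>R riesz_kernel s z w) \<le> \<bar>g\<bar> * e powr (-s)"
proof (cases "e < dist z w")
  case True
  then have "norm (riesz_kernel s z w) \<le> e powr (-s)" using assms by (intro kbound spos) auto
  then show ?thesis using True by (simp add: mult_left_mono)
qed simp

lemma tint: assumes "0 < e" "T \<in> sets borel"
  shows "integrable M (\<lambda>w. (indicator T w * indicator {y. e < dist z y} w) *\<^sub>R riesz_kernel s z w)"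
proof (rule finite_measure.integrable_const_bound[OF fin])
  show "AE w in M. norm ((indicator T w * indicator {y. e < dist z y} w) *\<^sub>R riesz_kernel s z w) \<le> e powr (-s)"
    by (intro AE_I2) (use kb_e[OF assms(1)] in \<open>auto simp: indicator_def\<close>)
  have "(\<lambda>w. (indicator T w * indicator {y. e < dist z y} w :: real)) \<in> borel_measurable borel"
    using assms(2) by measurable
  then show "(\<lambda>w. (indicator T w * indicator {y. e < dist z y} w) *\<^sub>R riesz_kernel s z w) \<in> borel_measurable M"
    by (intro borel_measurable_scaleR mKx measM)
qed

lemma antisym: assumes "0 < e" "Q \<in> sets borel"
  shows "(\<integral>z. indicator Q z *\<^sub>R (\<integral>w. (indicator Q w * indicator {y. e < dist z y} w) *\<^sub>R riesz_kernel s z w \<partial>M) \<partial>M) = 0"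
proof -
  define h where "h z w = (indicator Q z * indicator Q w * indicator {y. e < dist z y} w) *\<^sub>R riesz_kernel s z w" for z w
  have L: "(\<integral>z. indicator Q z *\<^sub>R (\<integral>w. (indicator Q w * indicator {y. e < dist z y} w) *\<^sub>R riesz_kernel s z w \<partial>M) \<partial>M)
      = (\<integral>z. (\<integral>w. h z w \<partial>M) \<partial>M)"
  proof -
    have "(\<integral>w. h z w \<partial>M) = indicator Q z *\<^sub>R (\<integral>w. (indicator Q w * indicator {y. e < dist z y} w) *\<^sub>R riesz_kernel s z w \<partial>M)" for z
      unfolding h_def by (subst integral_scaleR_right[symmetric]) (simp add: mult.assoc)
    then show ?thesis by simp
  qed
  have hm: "(\<lambda>p. h (fst p) (snd p)) \<in> borel_measurable (M \<Otimes>\<^sub>M M)"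
    unfolding h_def using assms(2)
    by (intro measMM borel_measurable_scaleR mK borel_measurable_times mS1 mS2 mI)
  have hb: "norm (h z w) \<le> e powr (-s)" for z w
    unfolding h_def using kb_e[OF assms(1), of z w] assms
    by (auto simp: indicator_def)
  have hi: "integrable (M \<Otimes>\<^sub>M M) (\<lambda>(z, w). h z w)"
    using hm hb by (intro finite_measure.integrable_const_bound[OF finite_measure_pair_measure[OF fin fin]])
      (auto simp: case_prod_beta)
  have PS: "pair_sigma_finite M M" by (intro pair_sigma_finite.intro sf)
  have F: "(\<integral>w. (\<integral>z. h z w \<partial>M) \<partial>M) = (\<integral>z. (\<integral>w. h z w \<partial>M) \<partial>M)"
    using pair_sigma_finite.Fubini_integral[OF PS hi] .
  have anti: "h z w = - h w z" for z w
  proof -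
    have "riesz_kernel s z w = - riesz_kernel s w z"
      unfolding riesz_kernel_def by (simp add: norm_minus_commute scaleR_right_diff_distrib)
    moreover have "indicator {y. e < dist z y} w = (indicator {y. e < dist w y} z :: real)"
      by (simp add: indicator_def dist_commute)
    ultimately have "h z w = (indicator Q w * indicator Q z * indicator {y. e < dist w y} z) *\<^sub>R (- riesz_kernel s w z)"
      unfolding h_def by (metis mult.commute)
    then show ?thesis unfolding h_def by simp
  qed
  have "(\<integral>w. (\<integral>z. h z w \<partial>M) \<partial>M) = (\<integral>w. (\<integral>z. - h w z \<partial>M) \<partial>M)"
    by (intro Bochner_Integration.integral_cong refl) (rule anti)
  also have "\<dots> = - (\<integral>w. (\<integral>z. h w z \<partial>M) \<partial>M)" by simp
  finally have "(\<integral>z. (\<integral>w. h z w \<partial>M) \<partial>M) = - (\<integral>z. (\<integral>w. h z w \<partial>M) \<partial>M)" using F by simp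
  then have "(\<integral>z. (\<integral>w. h z w \<partial>M) \<partial>M) = 0"
    by (metis eq_neg_iff_add_eq_0 scaleR_2 scaleR_eq_0_iff zero_neq_numeral)
  then show ?thesis using L by simp
qed

end


context cs2 begin

lemma Q0_cube: "Q0 \<in> cubes D" using Q0 cubesI by blast
lemma cube_sub_Q0: "P \<in> cubes D \<Longrightarrow> P \<subseteq> Q0" using sub_Q0 cubesE by metis

lemma gap: assumes "Q \<in> cubes D"
  shows "\<exists>\<delta>>0. \<forall>z\<in>Q. \<forall>w. w \<in> cantor_set D \<longrightarrow> w \<notin> Q \<longrightarrow> \<delta> \<le> dist z w"
proof -
  define X where "X = insert 1 (diameter ` {P\<in>ch Q Q0. 0 < diameter P})"
  have fX: "finite X" unfolding X_def using finite_ch[OF assms] by simp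
  have Xpos: "\<forall>x\<in>X. 0 < x" unfolding X_def by auto
  define \<delta> where "\<delta> = c * Min X"
  have "Min X \<in> X" using fX by (intro Min_in) (auto simp: X_def)
  then have dpos: "0 < \<delta>" unfolding \<delta>_def using Xpos cpos by simp
  have "\<delta> \<le> dist z w" if z: "z \<in> Q" and w: "w \<in> cantor_set D" "w \<notin> Q" for z w
  proof -
    obtain P where P: "P\<in>ch Q Q0" "w \<in> P" "0 < diameter P" "\<forall>x\<in>Q. c * diameter P \<le> dist x w"
      using PW[OF assms Q0_cube cube_sub_Q0[OF assms] w(1) E_Q0[OF w(1)] w(2)] by blast
    have "Min X \<le> diameter P" using fX P unfolding X_def by (intro Min_le) auto
    then have "\<delta> \<le> c * diameter P" unfolding \<delta>_def using cpos by simp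
    then show ?thesis using P z by force
  qed
  then show ?thesis using dpos by blast
qed

lemma int_bdd: fixes f :: "'a \<Rightarrow> 'a" assumes "f \<in> borel_measurable M" "A \<in> sets M" "\<And>z. z \<in> A \<Longrightarrow> norm (f z) \<le> B"
  shows "integrable M (\<lambda>z. indicator A z *\<^sub>R f z)"
proof (rule finite_measure.integrable_const_bound[OF fin])
  show "AE z in M. norm (indicator A z *\<^sub>R f z) \<le> \<bar>B\<bar>"
    using assms(3) by (intro AE_I2) (auto simp: indicator_def intro: order_trans[OF _ abs_ge_self])
  show "(\<lambda>z. indicator A z *\<^sub>R f z) \<in> borel_measurable M"
    using assms by (intro borel_measurable_scaleR borel_measurable_indicator)
qed

lemma trunc_bdd: assumes "0 < e" shows "norm (riesz_trunc M s e z) \<le> e powr (-s) * measure M (space M)"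
proof -
  have fi: "integrable M (\<lambda>w. indicator {y. e < dist z y} w *\<^sub>R riesz_kernel s z w)"
  proof (rule finite_measure.integrable_const_bound[OF fin])
    show "AE w in M. norm (indicator {y. e < dist z y} w *\<^sub>R riesz_kernel s z w) \<le> e powr (-s)"
      by (intro AE_I2) (use kb_e[OF assms] in \<open>auto simp: indicator_def\<close>)
    have "(\<lambda>w. (indicator {y. e < dist z y} w :: real)) \<in> borel_measurable borel" by measurable
    then show "(\<lambda>w. indicator {y. e < dist z y} w *\<^sub>R riesz_kernel s z w) \<in> borel_measurable M"
      by (intro borel_measurable_scaleR mKx measM)
  qed
  have "norm (riesz_trunc M s e z) \<le> (\<integral>w. e powr (-s) \<partial>M)"
    unfolding riesz_trunc_def
    by (rule bound_by[OF fi finite_measure.integrable_const[OF fin]]) (auto intro!: AE_I2 simp: indicator_def kb_e[OF assms])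
  also have "\<dots> = e powr (-s) * measure M (space M)" by simp
  finally show ?thesis .
qed

lemma riesz_compl_bdd: assumes "Q \<in> cubes D" "z \<in> Q"
  shows "integrable M (\<lambda>w. indicator (- Q) w *\<^sub>R riesz_kernel s z w)"
    "norm (riesz M s (- Q) z) \<le> (\<Sum>P\<in>ch Q Q0. measure M P * (c * diameter P) powr (-s))"
proof -
  have Qb: "Q \<in> sets borel" using cube_sets[OF assms(1)] sM by simp
  have Qc: "- Q \<in> sets borel" using Qb by auto
  have SE: "\<And>w. w \<in> - Q \<Longrightarrow> w \<in> cantor_set D \<Longrightarrow> w \<in> Q0 \<and> w \<notin> Q" using E_Q0 by auto
  show "integrable M (\<lambda>w. indicator (- Q) w *\<^sub>R riesz_kernel s z w)"
    "norm (riesz M s (- Q) z) \<le> (\<Sum>P\<in>ch Q Q0. measure M P * (c * diameter P) powr (-s))"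
    using IB1[OF assms(1) Q0_cube cube_sub_Q0[OF assms(1)] Qc SE assms(2)] by auto
qed

lemma trunc_split: assumes Q: "Q \<in> cubes D" and e: "0 < e" and gapd: "\<forall>z\<in>Q. \<forall>w. w \<in> cantor_set D \<longrightarrow> w \<notin> Q \<longrightarrow> \<delta> \<le> dist z w"
  and ed: "e < \<delta>" and z: "z \<in> Q"
  shows "riesz_trunc M s e z = (\<integral>w. (indicator Q w * indicator {y. e < dist z y} w) *\<^sub>R riesz_kernel s z w \<partial>M) + riesz M s (- Q) z"
proof -
  have Qb: "Q \<in> sets borel" using cube_sets[OF Q] sM by simp
  have Qc: "- Q \<in> sets borel" using Qb by auto
  have "riesz M s (- Q) z = (\<integral>w. (indicator (- Q) w * indicator {y. e < dist z y} w) *\<^sub>R riesz_kernel s z w \<partial>M)"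
    unfolding riesz_def
  proof (rule integral_cong_AE)
    show "(\<lambda>w. indicator (- Q) w *\<^sub>R riesz_kernel s z w) \<in> borel_measurable M"
      using riesz_compl_bdd(1)[OF Q z] by auto
    show "(\<lambda>w. (indicator (- Q) w * indicator {y. e < dist z y} w) *\<^sub>R riesz_kernel s z w) \<in> borel_measurable M"
      using tint[OF e Qc] by auto
    show "AE w in M. indicator (- Q) w *\<^sub>R riesz_kernel s z w = (indicator (- Q) w * indicator {y. e < dist z y} w) *\<^sub>R riesz_kernel s z w"
      using AE_E
    proof eventually_elim
      case (elim w)
      show ?case
      proof (cases "w \<in> Q")
        case False
        then have "\<delta> \<le> dist z w" using gapd z elim by blast
        then show ?thesis using False ed by (simp add: indicator_def)
      qed simp
    qed
  qed
  moreover have "riesz_trunc M s e z = (\<integral>w. (indicator Q w * indicator {y. e < dist z y} w) *\<^sub>R riesz_kernel s z w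
       + (indicator (- Q) w * indicator {y. e < dist z y} w) *\<^sub>R riesz_kernel s z w \<partial>M)"
    unfolding riesz_trunc_def
    by (intro Bochner_Integration.integral_cong refl) (simp add: indicator_def)
  moreover have "\<dots> = (\<integral>w. (indicator Q w * indicator {y. e < dist z y} w) *\<^sub>R riesz_kernel s z w \<partial>M)
      + (\<integral>w. (indicator (- Q) w * indicator {y. e < dist z y} w) *\<^sub>R riesz_kernel s z w \<partial>M)"
    by (intro Bochner_Integration.integral_add tint e Qb Qc)
  ultimately show ?thesis by simp
qed

lemma int_trunc_eq: assumes Q: "Q \<in> cubes D" and e: "0 < e" and gapd: "\<forall>z\<in>Q. \<forall>w. w \<in> cantor_set D \<longrightarrow> w \<notin> Q \<longrightarrow> \<delta> \<le> dist z w"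
  and ed: "e < \<delta>"
  shows "set_lebesgue_integral M Q (riesz_trunc M s e) = set_lebesgue_integral M Q (riesz M s (- Q))"
    "set_integrable M Q (riesz_trunc M s e)" "set_integrable M Q (riesz M s (- Q))"
proof -
  have Qb: "Q \<in> sets borel" using cube_sets[OF Q] sM by simp
  have QM: "Q \<in> sets M" using cube_sets[OF Q] .
  define T1 where "T1 z = (\<integral>w. (indicator Q w * indicator {y. e < dist z y} w) *\<^sub>R riesz_kernel s z w \<partial>M)" for z
  show iT: "set_integrable M Q (riesz_trunc M s e)"
    unfolding set_integrable_def by (intro int_bdd[OF trunc_meas QM, of _ "e powr (-s) * measure M (space M)"] trunc_bdd e)
  show iF: "set_integrable M Q (riesz M s (- Q))"
    unfolding set_integrable_def
    using Qb by (intro int_bdd[OF riesz_meas QM, of _ "\<Sum>P\<in>ch Q Q0. measure M P * (c * diameter P) powr (-s)"] riesz_compl_bdd(2)[OF Q]) auto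
  have eq: "indicator Q z *\<^sub>R T1 z = indicator Q z *\<^sub>R riesz_trunc M s e z - indicator Q z *\<^sub>R riesz M s (- Q) z" for z
    using trunc_split[OF Q e gapd ed, of z] unfolding T1_def by (cases "z \<in> Q") auto
  have i1: "integrable M (\<lambda>z. indicator Q z *\<^sub>R T1 z)"
    unfolding eq using iT iF unfolding set_integrable_def by (intro Bochner_Integration.integrable_diff)
  have z1: "(\<integral>z. indicator Q z *\<^sub>R T1 z \<partial>M) = 0" unfolding T1_def by (rule antisym[OF e Qb])
  have "set_lebesgue_integral M Q (riesz_trunc M s e) = (\<integral>z. indicator Q z *\<^sub>R T1 z + indicator Q z *\<^sub>R riesz M s (- Q) z \<partial>M)"
    unfolding set_lebesgue_integral_def by (intro Bochner_Integration.integral_cong refl) (simp add: eq)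
  also have "\<dots> = (\<integral>z. indicator Q z *\<^sub>R T1 z \<partial>M) + set_lebesgue_integral M Q (riesz M s (- Q))"
    unfolding set_lebesgue_integral_def using i1 iF unfolding set_integrable_def
    by (rule Bochner_Integration.integral_add)
  finally show "set_lebesgue_integral M Q (riesz_trunc M s e) = set_lebesgue_integral M Q (riesz M s (- Q))"
    using z1 by simp
qed

lemma Rmu_int: assumes Q: "Q \<in> cubes D" and iR: "set_integrable M Q Rmu"
  and lim: "((\<lambda>\<epsilon>. \<integral>\<^sup>+ z. indicator Q z * ennreal (norm (riesz_trunc M s \<epsilon> z - Rmu z)) \<partial>M) \<longlongrightarrow> 0) (at_right 0)"
  shows "set_lebesgue_integral M Q Rmu = set_lebesgue_integral M Q (riesz M s (- Q))"
proof -
  obtain \<delta> where d: "\<delta> > 0" "\<forall>z\<in>Q. \<forall>w. w \<in> cantor_set D \<longrightarrow> w \<notin> Q \<longrightarrow> \<delta> \<le> dist z w"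
    using gap[OF Q] by blast
  define X where "X = set_lebesgue_integral M Q Rmu - set_lebesgue_integral M Q (riesz M s (- Q))"
  have ev: "\<forall>\<^sub>F \<epsilon> in at_right 0. ennreal (norm X) \<le> (\<integral>\<^sup>+ z. indicator Q z * ennreal (norm (riesz_trunc M s \<epsilon> z - Rmu z)) \<partial>M)"
    using eventually_at_right_real[OF d(1)]
  proof eventually_elim
    case (elim e)
    then have e: "0 < e" "e < \<delta>" by auto
    note I = int_trunc_eq[OF Q e(1) d(2) e(2)]
    have "X = set_lebesgue_integral M Q Rmu - set_lebesgue_integral M Q (riesz_trunc M s e)"
      unfolding X_def I(1) ..
    also have "\<dots> = (\<integral>z. indicator Q z *\<^sub>R (Rmu z - riesz_trunc M s e z) \<partial>M)"
      unfolding set_lebesgue_integral_def using iR I(2) unfolding set_integrable_def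
      by (subst Bochner_Integration.integral_diff[symmetric]) (auto simp: scaleR_diff_right)
    finally have XX: "X = (\<integral>z. indicator Q z *\<^sub>R (Rmu z - riesz_trunc M s e z) \<partial>M)" .
    have int: "integrable M (\<lambda>z. indicator Q z *\<^sub>R (Rmu z - riesz_trunc M s e z))"
      using iR I(2) unfolding set_integrable_def scaleR_diff_right by (rule Bochner_Integration.integrable_diff)
    have "ennreal (norm X) \<le> (\<integral>\<^sup>+ z. ennreal (norm (indicator Q z *\<^sub>R (Rmu z - riesz_trunc M s e z))) \<partial>M)"
      unfolding XX by (rule integral_norm_bound_ennreal[OF int])
    also have "\<dots> = (\<integral>\<^sup>+ z. indicator Q z * ennreal (norm (riesz_trunc M s e z - Rmu z)) \<partial>M)"
      by (intro nn_integral_cong) (simp add: indicator_def norm_minus_commute)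
    finally show ?case .
  qed
  have "ennreal (norm X) \<le> 0"
    by (rule tendsto_le[OF trivial_limit_at_right_real lim tendsto_const ev])
  then have "X = 0" by simp
  then show ?thesis unfolding X_def by simp
qed

end


context cs2 begin

lemma mean_dev: fixes f :: "'a \<Rightarrow> 'a"
  assumes A: "A \<in> sets M" "0 < measure M A" and f: "f \<in> borel_measurable M"
  and b: "\<And>z. z \<in> A \<Longrightarrow> norm (f z - v) \<le> B"
  shows "norm (mean M A f - v) \<le> B"
proof -
  have iA: "integrable M (\<lambda>z. indicator A z *\<^sub>R f z)"
  proof (rule int_bdd[OF f A(1), of "norm v + B"])
    fix z assume "z \<in> A"
    then have "norm (f z - v) \<le> B" by (rule b)
    moreover have "norm (f z) \<le> norm v + norm (f z - v)" by (rule norm_triangle_sub)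
    ultimately show "norm (f z) \<le> norm v + B" by linarith
  qed
  have iA1: "integrable M (indicator A :: 'a \<Rightarrow> real)"
    using A(1) finite_measure.emeasure_finite[OF fin] by (intro integrable_real_indicator) (auto simp: less_top)
  have iv: "integrable M (\<lambda>z. indicator A z *\<^sub>R v)"
    using iA1 by (intro integrable_scaleR_left)
  have Iv: "(\<integral>z. indicator A z *\<^sub>R v \<partial>M) = measure M A *\<^sub>R v"
    using A(1) iA1 by (subst integral_scaleR_left) auto
  have ib: "integrable M (\<lambda>z. indicator A z * B)"
    using A(1) finite_measure.emeasure_finite[OF fin] by (intro integrable_mult_left integrable_real_indicator) (auto simp: less_top)
  have B0: "0 \<le> B"
  proof -
    have "A \<noteq> {}" using A(2) by auto
    then obtain z where "z \<in> A" by blast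
    from b[OF this] show ?thesis by (meson norm_ge_zero order_trans)
  qed
  have "set_lebesgue_integral M A f - measure M A *\<^sub>R v = (\<integral>z. indicator A z *\<^sub>R f z - indicator A z *\<^sub>R v \<partial>M)"
    unfolding set_lebesgue_integral_def Iv[symmetric] using iA iv by (simp add: Bochner_Integration.integral_diff)
  also have "norm \<dots> \<le> (\<integral>z. indicator A z * B \<partial>M)"
    by (rule bound_by[OF Bochner_Integration.integrable_diff[OF iA iv] ib])
      (auto intro!: AE_I2 simp: indicator_def b scaleR_diff_right[symmetric] B0)
  also have "\<dots> = measure M A * B" using A(1) by simp
  finally have n: "norm (set_lebesgue_integral M A f - measure M A *\<^sub>R v) \<le> measure M A * B" .
  have "mean M A f - v = (1 / measure M A) *\<^sub>R (set_lebesgue_integral M A f - measure M A *\<^sub>R v)"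
    unfolding mean_def using A(2) by (simp add: scaleR_diff_right)
  then have "norm (mean M A f - v) = (1 / measure M A) * norm (set_lebesgue_integral M A f - measure M A *\<^sub>R v)"
    using A(2) by simp
  also have "\<dots> \<le> (1 / measure M A) * (measure M A * B)" using n A(2) by (intro mult_left_mono) auto
  also have "\<dots> = B" using A(2) by simp
  finally show ?thesis .
qed

definition "K2 = (2 * s + 3) * c powr (-(s+1))"

lemma K2_nonneg: "0 \<le> K2" unfolding K2_def using spos by simp

lemma DIFF: assumes Q: "Q \<in> cubes D" "A \<in> cubes D" "Q \<subseteq> A" and S: "S \<in> sets borel"
  and SE: "\<And>w. w \<in> S \<Longrightarrow> w \<in> cantor_set D \<Longrightarrow> w \<in> A \<and> w \<notin> Q" and x: "x \<in> Q" "y \<in> Q"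
  shows "norm (riesz M s S x - riesz M s S y) \<le> K2 * dist x y * (\<Sum>P\<in>ch Q A. measure M P * diameter P powr (-(s+1)))"
proof -
  have "(\<Sum>P\<in>ch Q A. measure M P * ((2 * s + 3) * dist x y * (c * diameter P) powr (-(s+1))))
     = (\<Sum>P\<in>ch Q A. K2 * dist x y * (measure M P * diameter P powr (-(s+1))))"
    unfolding K2_def using cpos by (intro sum.cong refl) (simp add: powr_mult)
  also have "\<dots> = K2 * dist x y * (\<Sum>P\<in>ch Q A. measure M P * diameter P powr (-(s+1)))"
    by (simp add: sum_distrib_left)
  finally show ?thesis using IB2[OF assms] by simp
qed

lemma VAL: assumes Q: "Q \<in> cubes D" "A \<in> cubes D" "Q \<subseteq> A" and S: "S \<in> sets borel"
  and SE: "\<And>w. w \<in> S \<Longrightarrow> w \<in> cantor_set D \<Longrightarrow> w \<in> A \<and> w \<notin> Q" and x: "x \<in> Q"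
  shows "norm (riesz M s S x) \<le> c powr (-s) * (\<Sum>P\<in>ch Q A. Theta M s P)"
proof -
  have "(\<Sum>P\<in>ch Q A. measure M P * (c * diameter P) powr (-s)) = (\<Sum>P\<in>ch Q A. c powr (-s) * Theta M s P)"
    unfolding Theta_def using cpos by (intro sum.cong refl) (simp add: powr_mult powr_minus_divide)
  also have "\<dots> = c powr (-s) * (\<Sum>P\<in>ch Q A. Theta M s P)" by (simp add: sum_distrib_left)
  finally show ?thesis using IB1(2)[OF assms] by simp
qed

lemma S3: "diameter Q * (\<Sum>P\<in>ch Q A. measure M P * diameter P powr (-(s+1))) = pcoef2 D M s Q A"
  unfolding pcoef2_def ch_def[symmetric] sum_distrib_left Theta_def
proof (intro sum.cong refl)
  fix P assume PC: "P \<in> ch Q A"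
  show "diameter Q * (measure M P * diameter P powr (-(s+1))) = diameter Q / diameter P * (measure M P / diameter P powr s)"
  proof (cases "diameter P = 0")
    case True then show ?thesis by simp
  next
    case False
    then have d: "0 < diameter P" using diameter_ge_0[OF cube_bounded, of P] PC unfolding ch_def by force
    have e1: "diameter P powr (-(s+1)) = 1 / diameter P powr (s+1)" by (simp only: powr_minus_divide)
    have e2: "diameter P powr (s+1) = diameter P powr s * diameter P powr 1" by (simp only: powr_add)
    have "diameter P powr (-(s+1)) = 1 / (diameter P * diameter P powr s)"
      unfolding e1 e2 using d by (simp add: mult.commute)
    then show ?thesis by simp
  qed
qed

lemma pcoef_ch: "R \<in> cubes D \<Longrightarrow> pcoef D M s R = pcoef2 D M s R Q0"
  unfolding pcoef_def pcoef2_def using cube_sub_Q0 by (intro sum.cong) auto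

lemma Theta_nonneg: "0 \<le> Theta M s P" unfolding Theta_def by simp

lemma pcoef2_nonneg: "Q \<in> cubes D \<Longrightarrow> 0 \<le> pcoef2 D M s Q A"
  unfolding pcoef2_def by (intro sum_nonneg mult_nonneg_nonneg Theta_nonneg divide_nonneg_nonneg diameter_ge_0 cube_bounded) auto

lemma pcoef_nonneg: "Q \<in> cubes D \<Longrightarrow> 0 \<le> pcoef D M s Q"
  unfolding pcoef_def by (intro sum_nonneg mult_nonneg_nonneg Theta_nonneg divide_nonneg_nonneg diameter_ge_0 cube_bounded) auto

lemma main:
  assumes Q: "Q \<in> cubes D" "R \<in> cubes D" "Q \<subseteq> R" and x: "x \<in> Q" "y \<in> Q"
  and Rmu: "Rmu \<in> borel_measurable M" "\<forall>P\<in>cubes D. set_integrable M P Rmu"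
    "\<forall>P\<in>cubes D. ((\<lambda>\<epsilon>. \<integral>\<^sup>+ z. indicator P z * ennreal (norm (riesz_trunc M s \<epsilon> z - Rmu z)) \<partial>M) \<longlongrightarrow> 0) (at_right 0)"
  shows "norm (riesz M s (R - Q) x) \<le> c powr (-s) * (\<Sum>P\<in>{P\<in>cubes D. Q \<subseteq> P \<and> P \<subseteq> R}. Theta M s P)"
    "norm (riesz M s (R - Q) x - riesz M s (R - Q) y) \<le> K2 * (dist x y / diameter Q) * pcoef2 D M s Q R"
    "norm (riesz M s (R - Q) x - (mean M Q Rmu - mean M R Rmu)) \<le> K2 * pcoef2 D M s Q R + 2 * K2 * pcoef D M s R"
proof -
  have Qb: "Q \<in> sets borel" "R \<in> sets borel" using cube_sets Q sM by auto
  have RQb: "R - Q \<in> sets borel" and Rcb: "- R \<in> sets borel" using Qb by auto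
  have SE1: "\<And>w. w \<in> R - Q \<Longrightarrow> w \<in> cantor_set D \<Longrightarrow> w \<in> R \<and> w \<notin> Q" by auto
  have SE2: "\<And>w. w \<in> - R \<Longrightarrow> w \<in> cantor_set D \<Longrightarrow> w \<in> Q0 \<and> w \<notin> R" using E_Q0 by auto
  have R0: "R \<subseteq> Q0" using cube_sub_Q0 Q by blast
  show "norm (riesz M s (R - Q) x) \<le> c powr (-s) * (\<Sum>P\<in>{P\<in>cubes D. Q \<subseteq> P \<and> P \<subseteq> R}. Theta M s P)"
    using VAL[OF Q RQb SE1 x(1)] unfolding ch_def .
  have bQ: "bounded Q" "bounded R" using cube_bounded Q by auto
  have D1: "norm (riesz M s (R - Q) z - riesz M s (R - Q) x) \<le> K2 * (dist z x / diameter Q) * pcoef2 D M s Q R"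
    if z: "z \<in> Q" and x: "x \<in> Q" for z x
  proof (cases "diameter Q = 0")
    case True
    then have "z = x" using diam_le[OF bQ(1) z x] by simp
    then show ?thesis using K2_nonneg pcoef2_nonneg[OF Q(1)] by simp
  next
    case False
    have "norm (riesz M s (R - Q) z - riesz M s (R - Q) x)
       \<le> K2 * dist z x * (\<Sum>P\<in>ch Q R. measure M P * diameter P powr (-(s+1)))"
      by (rule DIFF[OF Q RQb SE1 z x])
    also have "\<dots> = K2 * (dist z x / diameter Q) * (diameter Q * (\<Sum>P\<in>ch Q R. measure M P * diameter P powr (-(s+1))))"
      using False by simp
    finally show ?thesis unfolding S3 .
  qed
  have "norm (riesz M s (R - Q) x - riesz M s (R - Q) y) \<le> K2 * (dist x y / diameter Q) * pcoef2 D M s Q R"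
    by (rule D1[OF x(1) x(2)])
  then show "norm (riesz M s (R - Q) x - riesz M s (R - Q) y) \<le> K2 * (dist x y / diameter Q) * pcoef2 D M s Q R" .
  define f1 where "f1 = riesz M s (R - Q)"
  define f2 where "f2 = riesz M s (- R)"
  define B1 where "B1 = K2 * pcoef2 D M s Q R"
  define B2 where "B2 = K2 * pcoef D M s R"
  have b1: "norm (f1 z - f1 x) \<le> B1" if z: "z \<in> Q" for z
  proof -
    have "norm (f1 z - f1 x) \<le> K2 * (dist z x / diameter Q) * pcoef2 D M s Q R" unfolding f1_def by (rule D1[OF z x(1)])
    also have "\<dots> \<le> K2 * 1 * pcoef2 D M s Q R"
    proof (intro mult_right_mono mult_left_mono K2_nonneg pcoef2_nonneg Q(1))
      show "dist z x / diameter Q \<le> 1"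
        using diam_le[OF bQ(1) z x(1)] diameter_ge_0[OF bQ(1)] by (cases "diameter Q = 0") (auto simp: divide_le_eq_1)
    qed
    finally show ?thesis unfolding B1_def by simp
  qed
  have b2: "norm (f2 z - f2 x) \<le> B2" if z: "z \<in> R" for z
  proof -
    have xR: "x \<in> R" using x Q by blast
    have "norm (f2 z - f2 x) \<le> K2 * dist z x * (\<Sum>P\<in>ch R Q0. measure M P * diameter P powr (-(s+1)))"
      unfolding f2_def by (rule DIFF[OF Q(2) Q0_cube R0 Rcb SE2 z xR])
    also have "\<dots> \<le> K2 * diameter R * (\<Sum>P\<in>ch R Q0. measure M P * diameter P powr (-(s+1)))"
      using diam_le[OF bQ(2) z xR] K2_nonneg
      by (intro mult_right_mono mult_left_mono sum_nonneg) auto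
    also have "\<dots> = K2 * pcoef D M s R" unfolding pcoef_ch[OF Q(2)] S3[symmetric] by simp
    finally show ?thesis unfolding B2_def .
  qed
  have mQ: "mean M Q Rmu = mean M Q (riesz M s (- Q))"
    unfolding mean_def using Rmu_int[OF Q(1)] Rmu Q by simp
  have mR: "mean M R Rmu = mean M R f2"
    unfolding mean_def f2_def using Rmu_int[OF Q(2)] Rmu Q by simp
  have split: "riesz M s (- Q) z = f1 z + f2 z" if z: "z \<in> Q" for z
  proof -
    have zR: "z \<in> R" using z Q by blast
    have i1: "integrable M (\<lambda>w. indicator (R - Q) w *\<^sub>R riesz_kernel s z w)" by (rule IB1(1)[OF Q RQb SE1 z])
    have i2: "integrable M (\<lambda>w. indicator (- R) w *\<^sub>R riesz_kernel s z w)"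
      by (rule IB1(1)[OF Q(2) Q0_cube R0 Rcb SE2 zR])
    have "riesz M s (- Q) z = (\<integral>w. indicator (R - Q) w *\<^sub>R riesz_kernel s z w + indicator (- R) w *\<^sub>R riesz_kernel s z w \<partial>M)"
      unfolding riesz_def using Q(3) by (intro Bochner_Integration.integral_cong refl) (auto simp: indicator_def)
    also have "\<dots> = f1 z + f2 z" unfolding f1_def f2_def riesz_def
      by (rule Bochner_Integration.integral_add[OF i1 i2])
    finally show ?thesis .
  qed
  have posQ: "0 < measure M Q" "0 < measure M R" using pos Q by auto
  have QM: "Q \<in> sets M" "R \<in> sets M" using cube_sets Q by auto
  have e1: "norm (mean M Q Rmu - (f1 x + f2 x)) \<le> B1 + B2"
    unfolding mQ
  proof (rule mean_dev[OF QM(1) posQ(1) riesz_meas])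
    show "- Q \<in> sets borel" using Qb by auto
    fix z assume z: "z \<in> Q"
    have "norm (riesz M s (- Q) z - (f1 x + f2 x)) = norm ((f1 z - f1 x) + (f2 z - f2 x))"
      unfolding split[OF z] by (simp add: algebra_simps)
    also have "\<dots> \<le> norm (f1 z - f1 x) + norm (f2 z - f2 x)" by (rule norm_triangle_ineq)
    also have "\<dots> \<le> B1 + B2" using b1[OF z] b2[of z] z Q by force
    finally show "norm (riesz M s (- Q) z - (f1 x + f2 x)) \<le> B1 + B2" .
  qed
  have e2: "norm (mean M R Rmu - f2 x) \<le> B2"
    unfolding mR f2_def by (rule mean_dev[OF QM(2) posQ(2) riesz_meas[OF Rcb]]) (use b2 in \<open>auto simp: f2_def\<close>)
  have "riesz M s (R - Q) x - (mean M Q Rmu - mean M R Rmu) = ((f1 x + f2 x) - mean M Q Rmu) + (mean M R Rmu - f2 x)"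
    unfolding f1_def by (simp add: algebra_simps)
  also have "norm \<dots> \<le> norm ((f1 x + f2 x) - mean M Q Rmu) + norm (mean M R Rmu - f2 x)" by (rule norm_triangle_ineq)
  also have "\<dots> \<le> (B1 + B2) + B2" using e1 e2 by (simp add: norm_minus_commute)
  finally show "norm (riesz M s (R - Q) x - (mean M Q Rmu - mean M R Rmu)) \<le> K2 * pcoef2 D M s Q R + 2 * K2 * pcoef D M s R"
    unfolding B1_def B2_def by simp
qed

end



theorem lemma2p3:
  fixes s c :: real
  assumes "0 < s" "s < real DIM('a::euclidean_space)" "0 < c"
  shows "\<exists>C>0. \<forall>(D :: nat \<Rightarrow> 'a set set) (M :: 'a measure) (Rmu :: 'a \<Rightarrow> 'a) Q R x y.
     cantor_system c D \<and>
     sets M = sets borel \<and> finite_measure M \<and>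
     emeasure M (- cantor_set D) = 0 \<and>
     (\<forall>P\<in>cubes D. 0 < measure M P) \<and>
     Rmu \<in> borel_measurable M \<and>
     (\<forall>P\<in>cubes D. set_integrable M P Rmu) \<and>
     (\<forall>P\<in>cubes D. ((\<lambda>\<epsilon>. \<integral>\<^sup>+ z. indicator P z * ennreal (norm (riesz_trunc M s \<epsilon> z - Rmu z)) \<partial>M)
                        \<longlongrightarrow> 0) (at_right 0)) \<and>
     Q \<in> cubes D \<and> R \<in> cubes D \<and> Q \<subseteq> R \<and> x \<in> Q \<and> y \<in> Q
     \<longrightarrow>
       norm (riesz M s (R - Q) x) \<le> C * (\<Sum>P\<in>{P\<in>cubes D. Q \<subseteq> P \<and> P \<subseteq> R}. Theta M s P) \<and>
       norm (riesz M s (R - Q) x - riesz M s (R - Q) y) \<le> C * (dist x y / diameter Q) * pcoef2 D M s Q R \<and>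
       norm (riesz M s (R - Q) x - (mean M Q Rmu - mean M R Rmu)) \<le> C * (pcoef2 D M s Q R + pcoef D M s R)"
proof -
  define K where "K = (2 * s + 3) * c powr (-(s+1))"
  define C where "C = c powr (-s) + 2 * K + 1"
  have K0: "0 \<le> K" unfolding K_def using assms by simp
  have Cpos: "0 < C" unfolding C_def using K0 by (simp add: add_nonneg_pos)
  have C1: "c powr (-s) \<le> C" and C2: "K \<le> C" and C3: "2 * K \<le> C" unfolding C_def using K0 by auto
  show ?thesis
  proof (intro exI[of _ C] conjI allI impI Cpos)
    fix D :: "nat \<Rightarrow> 'a set set" and M :: "'a measure" and Rmu :: "'a \<Rightarrow> 'a" and Q R x y
    assume H: "cantor_system c D \<and>
     sets M = sets borel \<and> finite_measure M \<and>
     emeasure M (- cantor_set D) = 0 \<and>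
     (\<forall>P\<in>cubes D. 0 < measure M P) \<and>
     Rmu \<in> borel_measurable M \<and>
     (\<forall>P\<in>cubes D. set_integrable M P Rmu) \<and>
     (\<forall>P\<in>cubes D. ((\<lambda>\<epsilon>. \<integral>\<^sup>+ z. indicator P z * ennreal (norm (riesz_trunc M s \<epsilon> z - Rmu z)) \<partial>M)
                        \<longlongrightarrow> 0) (at_right 0)) \<and>
     Q \<in> cubes D \<and> R \<in> cubes D \<and> Q \<subseteq> R \<and> x \<in> Q \<and> y \<in> Q"
    from H have Hs: "cantor_system c D" "sets M = sets borel" "finite_measure M"
      "emeasure M (- cantor_set D) = 0" "\<forall>P\<in>cubes D. 0 < measure M P" "Rmu \<in> borel_measurable M"
      "\<forall>P\<in>cubes D. set_integrable M P Rmu"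
      "\<forall>P\<in>cubes D. ((\<lambda>\<epsilon>. \<integral>\<^sup>+ z. indicator P z * ennreal (norm (riesz_trunc M s \<epsilon> z - Rmu z)) \<partial>M) \<longlongrightarrow> 0) (at_right 0)"
      and Q: "Q \<in> cubes D" "R \<in> cubes D" "Q \<subseteq> R" "x \<in> Q" "y \<in> Q"
      by blast+
    interpret cs2 c D M s
      by (intro cs2.intro cs.intro cs2_axioms.intro assms(1) assms(3) Hs(1-5))
    have KK: "K2 = K" unfolding K2_def K_def ..
    note m = main[OF Q Hs(6-8), unfolded KK]
    have m1: "norm (riesz M s (R - Q) x) \<le> c powr (-s) * (\<Sum>P\<in>{P\<in>cubes D. Q \<subseteq> P \<and> P \<subseteq> R}. Theta M s P)"
      and m2: "norm (riesz M s (R - Q) x - riesz M s (R - Q) y) \<le> K * (dist x y / diameter Q) * pcoef2 D M s Q R"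
      and m3: "norm (riesz M s (R - Q) x - (mean M Q Rmu - mean M R Rmu)) \<le> K * pcoef2 D M s Q R + 2 * K * pcoef D M s R"
      using m by auto
    have sT: "0 \<le> (\<Sum>P\<in>{P\<in>cubes D. Q \<subseteq> P \<and> P \<subseteq> R}. Theta M s P)"
      by (intro sum_nonneg Theta_nonneg)
    have p2: "0 \<le> pcoef2 D M s Q R" "0 \<le> pcoef D M s R" using pcoef2_nonneg pcoef_nonneg Q by auto
    have dd: "0 \<le> dist x y / diameter Q" using diameter_ge_0[OF cube_bounded[OF Q(1)]] by (intro divide_nonneg_nonneg zero_le_dist)
    show "norm (riesz M s (R - Q) x) \<le> C * (\<Sum>P\<in>{P\<in>cubes D. Q \<subseteq> P \<and> P \<subseteq> R}. Theta M s P)"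
      using m1 mult_right_mono[OF C1 sT] by linarith
    show "norm (riesz M s (R - Q) x - riesz M s (R - Q) y) \<le> C * (dist x y / diameter Q) * pcoef2 D M s Q R"
      using m2 mult_right_mono[OF mult_right_mono[OF C2 dd] p2(1)] by linarith
    have "K * pcoef2 D M s Q R + 2 * K * pcoef D M s R \<le> C * pcoef2 D M s Q R + C * pcoef D M s R"
      using mult_right_mono[OF C2 p2(1)] mult_right_mono[OF C3 p2(2)] by linarith
    then show "norm (riesz M s (R - Q) x - (mean M Q Rmu - mean M R Rmu)) \<le> C * (pcoef2 D M s Q R + pcoef D M s R)"
      using m3 by (simp add: distrib_left)
  qed
qed


end
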